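(* Let $(X,\mathscr{A},\mu)$ be a $\sigma$-finite measure space and $\phi$ a nonsingular transformation of $X$. If the composition operator $C_\phi$ is symmetric, then $C_\phi$ is selfadjoint and unitary, and $C_\phi^2=I$. If $C_\phi$ is positive and symmetric, then $C_\phi=I$.
   Context: Nonsingular: $\phi^{-1}(\Delta)\in\mathscr{A}$ for $\Delta\in\mathscr{A}$ and $\mu(\phi^{-1}(\Delta))=0$ whenever $\mu(\Delta)=0$. $C_\phi$ is the operator in $L^2(\mu)$ with $\mathcal{D}(C_\phi)=\{f\in L^2(\mu):f\circ\phi\in L^2(\mu)\}$, $C_\phi f=f\circ\phi$. A densely defined operator $A$ is symmetric if $A\subseteq A^*$; positive means $\langle Af,f\rangle\ge0$ for $f\in\mathcal{D}(A)$. *)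

theory Defs
  imports "HOL-Analysis.Analysis" "HOL-Library.Complex_Order"
begin

text \<open>Elements of L^2(mu) are represented by complex-valued square integrable
measurable functions; everything is understood modulo mu-a.e. equality.
(Possibly unbounded) operators in L^2(mu) are represented by their graphs,
i.e. sets of pairs (f, A f).\<close>

definition L2 :: "'a measure \<Rightarrow> ('a \<Rightarrow> complex) set" where
  "L2 M = {f. f \<in> borel_measurable M \<and> integrable M (\<lambda>x. (cmod (f x))^2)}"

definition L2_inner :: "'a measure \<Rightarrow> ('a \<Rightarrow> complex) \<Rightarrow> ('a \<Rightarrow> complex) \<Rightarrow> complex" where
  "L2_inner M f g = (\<integral>x. f x * cnj (g x) \<partial>M)"

definition L2_norm :: "'a measure \<Rightarrow> ('a \<Rightarrow> complex) \<Rightarrow> real" where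
  "L2_norm M f = sqrt (\<integral>x. (cmod (f x))^2 \<partial>M)"

definition aeq :: "'a measure \<Rightarrow> ('a \<Rightarrow> complex) \<Rightarrow> ('a \<Rightarrow> complex) \<Rightarrow> bool" where
  "aeq M f g \<longleftrightarrow> (AE x in M. f x = g x)"

type_synonym 'a l2op = "(('a \<Rightarrow> complex) \<times> ('a \<Rightarrow> complex)) set"

definition nonsingular :: "'a measure \<Rightarrow> ('a \<Rightarrow> 'a) \<Rightarrow> bool" where
  "nonsingular M \<phi> \<longleftrightarrow> \<phi> \<in> measurable M M \<and>
     (\<forall>\<Delta>\<in>sets M. emeasure M \<Delta> = 0 \<longrightarrow> emeasure M (\<phi> -` \<Delta> \<inter> space M) = 0)"

definition comp_op :: "'a measure \<Rightarrow> ('a \<Rightarrow> 'a) \<Rightarrow> 'a l2op" where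
  "comp_op M \<phi> = {(f, f \<circ> \<phi>) | f. f \<in> L2 M \<and> f \<circ> \<phi> \<in> L2 M}"

definition identity_op :: "'a measure \<Rightarrow> 'a l2op" where
  "identity_op M = {(f, f) | f. f \<in> L2 M}"

definition op_dom :: "'a l2op \<Rightarrow> ('a \<Rightarrow> complex) set" where
  "op_dom A = fst ` A"

definition op_sub :: "'a measure \<Rightarrow> 'a l2op \<Rightarrow> 'a l2op \<Rightarrow> bool" where
  "op_sub M A B \<longleftrightarrow> (\<forall>(f, g)\<in>A. \<exists>(f', g')\<in>B. aeq M f f' \<and> aeq M g g')"

definition op_eq :: "'a measure \<Rightarrow> 'a l2op \<Rightarrow> 'a l2op \<Rightarrow> bool" where
  "op_eq M A B \<longleftrightarrow> op_sub M A B \<and> op_sub M B A"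

definition op_comp :: "'a measure \<Rightarrow> 'a l2op \<Rightarrow> 'a l2op \<Rightarrow> 'a l2op" where
  "op_comp M A B = {(f, h) | f g g' h. (f, g) \<in> B \<and> aeq M g g' \<and> (g', h) \<in> A}"

definition densely_defined :: "'a measure \<Rightarrow> 'a l2op \<Rightarrow> bool" where
  "densely_defined M A \<longleftrightarrow> op_dom A \<subseteq> L2 M \<and>
     (\<forall>g\<in>L2 M. \<forall>e>0. \<exists>f\<in>op_dom A. L2_norm M (\<lambda>x. f x - g x) < e)"

definition adjoint_op :: "'a measure \<Rightarrow> 'a l2op \<Rightarrow> 'a l2op" where
  "adjoint_op M A = {(g, h). g \<in> L2 M \<and> h \<in> L2 M \<and>
     (\<forall>(f, k)\<in>A. L2_inner M k g = L2_inner M f h)}"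

definition symmetric_op :: "'a measure \<Rightarrow> 'a l2op \<Rightarrow> bool" where
  "symmetric_op M A \<longleftrightarrow> densely_defined M A \<and> op_sub M A (adjoint_op M A)"

definition selfadjoint_op :: "'a measure \<Rightarrow> 'a l2op \<Rightarrow> bool" where
  "selfadjoint_op M A \<longleftrightarrow> densely_defined M A \<and> op_eq M A (adjoint_op M A)"

definition positive_op :: "'a measure \<Rightarrow> 'a l2op \<Rightarrow> bool" where
  "positive_op M A \<longleftrightarrow> (\<forall>(f, g)\<in>A. 0 \<le> L2_inner M g f)"

definition unitary_op :: "'a measure \<Rightarrow> 'a l2op \<Rightarrow> bool" where
  "unitary_op M A \<longleftrightarrow>
     (\<forall>f\<in>L2 M. \<exists>(f', g)\<in>A. aeq M f f') \<and>
     (\<forall>(f, g)\<in>A. L2_norm M g = L2_norm M f) \<and>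
     (\<forall>h\<in>L2 M. \<exists>(f, g)\<in>A. aeq M g h)"

end

theory Submission
  imports Defs
begin

lemma measurable_cnj[measurable]: "f \<in> borel_measurable M \<Longrightarrow> (\<lambda>x. cnj (f x)) \<in> borel_measurable M"
  by (rule borel_measurable_continuous_on[where f=cnj]) (auto intro: continuous_intros)

lemma real_ab_le: fixes a b :: real assumes "0 \<le> a" "0 \<le> b" shows "a * b \<le> a^2 + b^2"
proof -
  have "0 \<le> (a - b)^2" by simp
  moreover have "0 \<le> a * b" using assms by simp
  ultimately show ?thesis by (simp add: power2_diff)
qed

lemma real_sum_sq: fixes a b :: real shows "(a + b)^2 \<le> 2*a^2 + 2*b^2"
proof -
  have "0 \<le> (a - b)^2" by simp
  then show ?thesis by (simp add: power2_diff power2_sum)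
qed

lemma L2_mult_int:
  assumes "f \<in> L2 M" "g \<in> L2 M"
  shows "integrable M (\<lambda>x. f x * cnj (g x))"
proof -
  have m: "f \<in> borel_measurable M" "g \<in> borel_measurable M"
    and i: "integrable M (\<lambda>x. (cmod (f x))^2)" "integrable M (\<lambda>x. (cmod (g x))^2)"
    using assms by (auto simp: L2_def)
  show ?thesis
  proof (rule Bochner_Integration.integrable_bound[OF Bochner_Integration.integrable_add[OF i]])
    show "(\<lambda>x. f x * cnj (g x)) \<in> borel_measurable M" using m by measurable
    show "AE x in M. norm (f x * cnj (g x)) \<le> norm ((cmod (f x))\<^sup>2 + (cmod (g x))\<^sup>2)"
    proof (rule AE_I2)
      fix x
      have "cmod (f x) * cmod (g x) \<le> (cmod (f x))\<^sup>2 + (cmod (g x))\<^sup>2"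
        by (rule real_ab_le) auto
      then show "norm (f x * cnj (g x)) \<le> norm ((cmod (f x))\<^sup>2 + (cmod (g x))\<^sup>2)"
        by (simp add: norm_mult)
    qed
  qed
qed

lemma L2_diff:
  assumes "f \<in> L2 M" "g \<in> L2 M"
  shows "(\<lambda>x. f x - g x) \<in> L2 M"
proof -
  have m: "f \<in> borel_measurable M" "g \<in> borel_measurable M"
    and i: "integrable M (\<lambda>x. (cmod (f x))^2)" "integrable M (\<lambda>x. (cmod (g x))^2)"
    using assms by (auto simp: L2_def)
  have "integrable M (\<lambda>x. (cmod (f x - g x))^2)"
  proof (rule Bochner_Integration.integrable_bound[OF Bochner_Integration.integrable_add[OF integrable_mult_right[OF i(1), of 2] integrable_mult_right[OF i(2), of 2]]])
    show "(\<lambda>x. (cmod (f x - g x))^2) \<in> borel_measurable M" using m by measurable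
    show "AE x in M. norm ((cmod (f x - g x))^2) \<le> norm (2 * (cmod (f x))\<^sup>2 + 2 * (cmod (g x))\<^sup>2)"
    proof (rule AE_I2)
      fix x
      have "cmod (f x - g x) \<le> cmod (f x) + cmod (g x)" by (rule norm_triangle_ineq4)
      hence "(cmod (f x - g x))^2 \<le> (cmod (f x) + cmod (g x))^2"
        by (simp add: power_mono)
      also have "\<dots> \<le> 2 * (cmod (f x))\<^sup>2 + 2 * (cmod (g x))\<^sup>2"
        by (rule real_sum_sq)
      finally show "norm ((cmod (f x - g x))^2) \<le> norm (2 * (cmod (f x))\<^sup>2 + 2 * (cmod (g x))\<^sup>2)"
        by simp
    qed
  qed
  then show ?thesis using m by (auto simp: L2_def)
qed

lemma L2_inner_self: "L2_inner M f f = of_real (\<integral>x. (cmod (f x))^2 \<partial>M)"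
proof -
  have "L2_inner M f f = (\<integral>x. complex_of_real ((cmod (f x))^2) \<partial>M)"
    unfolding L2_inner_def by (rule Bochner_Integration.integral_cong) (simp_all add: complex_mult_cnj cmod_power2)
  then show ?thesis by (simp only: integral_complex_of_real)
qed

lemma L2_ae_zero:
  assumes "f \<in> L2 M" "(\<integral>x. (cmod (f x))^2 \<partial>M) = 0"
  shows "AE x in M. f x = 0"
proof -
  have "integrable M (\<lambda>x. (cmod (f x))^2)" using assms by (auto simp: L2_def)
  then have "AE x in M. (cmod (f x))^2 = 0"
    using integral_nonneg_eq_0_iff_AE[of M "\<lambda>x. (cmod (f x))^2"] assms(2) by auto
  then show ?thesis by auto
qed

lemma markov2:
  assumes "g \<in> L2 M" "c > 0"
  shows "emeasure M {x\<in>space M. c \<le> cmod (g x)} \<le> ennreal ((\<integral>x. (cmod (g x))^2 \<partial>M) / c^2)"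
proof -
  have m: "g \<in> borel_measurable M" and i: "integrable M (\<lambda>x. (cmod (g x))^2)"
    using assms by (auto simp: L2_def)
  have S: "{x\<in>space M. c \<le> cmod (g x)} \<in> sets M" using m by measurable
  have "emeasure M {x\<in>space M. c \<le> cmod (g x)} = (\<integral>\<^sup>+x. indicator {x\<in>space M. c \<le> cmod (g x)} x \<partial>M)"
    using S by simp
  also have "\<dots> \<le> (\<integral>\<^sup>+x. ennreal ((cmod (g x))^2 / c^2) \<partial>M)"
  proof (rule nn_integral_mono)
    fix x assume x: "x \<in> space M"
    show "indicator {x\<in>space M. c \<le> cmod (g x)} x \<le> ennreal ((cmod (g x))^2 / c^2)"
    proof (cases "c \<le> cmod (g x)")
      case True
      then have "c^2 \<le> (cmod (g x))^2" using assms(2) by (simp add: power_mono)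
      then have "1 \<le> (cmod (g x))^2 / c^2" using assms(2) by simp
      then show ?thesis using x True by (simp add: indicator_def)
    qed (simp add: indicator_def)
  qed
  also have "\<dots> = ennreal (\<integral>x. (cmod (g x))^2 / c^2 \<partial>M)"
    by (rule nn_integral_eq_integral) (use i in auto)
  also have "\<dots> = ennreal ((\<integral>x. (cmod (g x))^2 \<partial>M) / c^2)" by simp
  finally show ?thesis .
qed

lemma inner_cong:
  assumes "aeq M f f'" "aeq M g g'" "f \<in> borel_measurable M" "f' \<in> borel_measurable M"
    "g \<in> borel_measurable M" "g' \<in> borel_measurable M"
  shows "L2_inner M f g = L2_inner M f' g'"
  unfolding L2_inner_def
  by (rule integral_cong_AE) (use assms in \<open>auto simp: aeq_def elim!: AE_mp\<close>)

lemma ind_L2: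
  assumes "A \<in> sets M" "emeasure M A < \<infinity>"
  shows "(indicator A :: _ \<Rightarrow> complex) \<in> L2 M"
proof -
  have "(\<lambda>x. (cmod (indicator A x :: complex))^2) = indicator A"
    by (auto simp: indicator_def)
  then show ?thesis using assms by (auto simp: L2_def)
qed

lemma L2_expand:
  assumes a: "a \<in> L2 M" and b: "b \<in> L2 M"
  shows "(\<integral>x. (cmod (a x - b x))^2 \<partial>M) =
    (\<integral>x. (cmod (a x))^2 \<partial>M) + (\<integral>x. (cmod (b x))^2 \<partial>M) - 2 * Re (L2_inner M a b)"
proof -
  have ia: "integrable M (\<lambda>x. (cmod (a x))^2)" and ib: "integrable M (\<lambda>x. (cmod (b x))^2)"
    using a b by (auto simp: L2_def)
  have iab: "integrable M (\<lambda>x. a x * cnj (b x))" by (rule L2_mult_int[OF a b])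
  have iR: "integrable M (\<lambda>x. 2 * Re (a x * cnj (b x)))"
    by (intro integrable_mult_right integrable_Re iab)
  have "(\<integral>x. (cmod (a x - b x))^2 \<partial>M) = (\<integral>x. ((cmod (a x))^2 + (cmod (b x))^2) - 2 * Re (a x * cnj (b x)) \<partial>M)"
    by (rule Bochner_Integration.integral_cong) (simp_all add: cmod_power2 power2_diff algebra_simps)
  also have "\<dots> = (\<integral>x. (cmod (a x))^2 + (cmod (b x))^2 \<partial>M) - (\<integral>x. 2 * Re (a x * cnj (b x)) \<partial>M)"
    by (rule Bochner_Integration.integral_diff[OF Bochner_Integration.integrable_add[OF ia ib] iR])
  also have "(\<integral>x. (cmod (a x))^2 + (cmod (b x))^2 \<partial>M) = (\<integral>x. (cmod (a x))^2 \<partial>M) + (\<integral>x. (cmod (b x))^2 \<partial>M)"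
    by (rule Bochner_Integration.integral_add[OF ia ib])
  also have "(\<integral>x. 2 * Re (a x * cnj (b x)) \<partial>M) = 2 * (\<integral>x. Re (a x * cnj (b x)) \<partial>M)"
    by (simp only: integral_mult_right_zero)
  also have "(\<integral>x. Re (a x * cnj (b x)) \<partial>M) = Re (L2_inner M a b)"
    unfolding L2_inner_def by (rule integral_Re[OF iab])
  finally show ?thesis .
qed

lemma op_subI: "(\<And>f g. (f,g) \<in> A \<Longrightarrow> \<exists>f' g'. (f',g') \<in> B \<and> aeq M f f' \<and> aeq M g g') \<Longrightarrow> op_sub M A B"
  unfolding op_sub_def by fastforce

locale cs =
  fixes M :: "'a measure" and \<phi> :: "'a \<Rightarrow> 'a"
  assumes sf: "sigma_finite_measure M" and ns: "nonsingular M \<phi>"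
    and sym: "symmetric_op M (comp_op M \<phi>)"
begin

definition P where "P A = \<phi> -` A \<inter> space M"

lemma phi_meas[measurable]: "\<phi> \<in> measurable M M"
  using ns by (simp add: nonsingular_def)

lemma P_sets[measurable]: "A \<in> sets M \<Longrightarrow> P A \<in> sets M"
  unfolding P_def by (rule measurable_sets[OF phi_meas])

lemma null_pre: "A \<in> null_sets M \<Longrightarrow> P A \<in> null_sets M"
  using ns P_sets[of A] unfolding nonsingular_def P_def by (auto simp: null_sets_def)

lemma sym_gen:
  assumes "f \<in> L2 M" "f \<circ> \<phi> \<in> L2 M" "k \<in> L2 M" "k \<circ> \<phi> \<in> L2 M"
  shows "L2_inner M (k \<circ> \<phi>) f = L2_inner M k (f \<circ> \<phi>)"
proof -
  have "(f, f \<circ> \<phi>) \<in> comp_op M \<phi>" using assms by (auto simp: comp_op_def)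
  with sym obtain f' h where fh: "(f', h) \<in> adjoint_op M (comp_op M \<phi>)" "aeq M f f'" "aeq M (f \<circ> \<phi>) h"
    unfolding symmetric_op_def op_sub_def by fastforce
  have kk: "(k, k \<circ> \<phi>) \<in> comp_op M \<phi>" using assms by (auto simp: comp_op_def)
  from fh(1) have L: "f' \<in> L2 M" "h \<in> L2 M" and E: "L2_inner M (k \<circ> \<phi>) f' = L2_inner M k h"
    using kk unfolding adjoint_op_def by auto
  have "L2_inner M (k \<circ> \<phi>) f = L2_inner M (k \<circ> \<phi>) f'"
    by (rule inner_cong) (use assms L fh in \<open>auto simp: L2_def aeq_def\<close>)
  also have "\<dots> = L2_inner M k h" by (rule E)
  also have "\<dots> = L2_inner M k (f \<circ> \<phi>)"
    by (rule inner_cong) (use assms L fh in \<open>auto simp: L2_def aeq_def elim: AE_mp\<close>)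
  finally show ?thesis .
qed

definition good where "good A \<longleftrightarrow> A \<in> sets M \<and> emeasure M A < \<infinity> \<and> emeasure M (P A) < \<infinity>"

lemma good_ind:
  assumes "good A"
  shows "(indicator A :: _ \<Rightarrow> complex) \<in> L2 M" "(indicator A :: _ \<Rightarrow> complex) \<circ> \<phi> \<in> L2 M"
proof -
  show "(indicator A :: _ \<Rightarrow> complex) \<in> L2 M" using assms ind_L2 good_def by auto
  have "(indicator (P A) :: _ \<Rightarrow> complex) \<in> L2 M" using assms ind_L2[of "P A" M] good_def P_sets by auto
  moreover have "(indicator A :: _ \<Rightarrow> complex) \<circ> \<phi> \<in> borel_measurable M"
    using assms unfolding good_def comp_def
    by (intro measurable_compose[OF phi_meas] borel_measurable_indicator) auto
  moreover have "integrable M (\<lambda>x. (cmod (((indicator A :: _ \<Rightarrow> complex) \<circ> \<phi>) x))^2) \<longleftrightarrow> integrable M (\<lambda>x. (cmod (indicator (P A) x :: complex))^2)"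
    by (rule Bochner_Integration.integrable_cong) (auto simp: P_def indicator_def)
  ultimately show "(indicator A :: _ \<Rightarrow> complex) \<circ> \<phi> \<in> L2 M"
    unfolding L2_def by auto
qed

lemma good_sym:
  assumes A: "good A" and B: "good B"
  shows "emeasure M (A \<inter> P B) = emeasure M (B \<inter> P A)"
proof -
  have AS: "A \<in> sets M" "B \<in> sets M" using A B good_def by auto
  have "L2_inner M ((indicator B :: _ \<Rightarrow> complex) \<circ> \<phi>) (indicator A) = L2_inner M (indicator B) ((indicator A :: _ \<Rightarrow> complex) \<circ> \<phi>)"
    by (rule sym_gen) (use good_ind A B in auto)
  moreover have "L2_inner M ((indicator B :: _ \<Rightarrow> complex) \<circ> \<phi>) (indicator A) = of_real (measure M (A \<inter> P B))"
  proof -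
    have "L2_inner M ((indicator B :: _ \<Rightarrow> complex) \<circ> \<phi>) (indicator A) = (\<integral>x. complex_of_real (indicator (A \<inter> P B) x) \<partial>M)"
      unfolding L2_inner_def by (rule Bochner_Integration.integral_cong) (auto simp: P_def indicator_def)
    then show ?thesis using AS P_sets sets.sets_into_space by (simp add: Int_absorb2)
  qed
  moreover have "L2_inner M (indicator B :: _ \<Rightarrow> complex) ((indicator A :: _ \<Rightarrow> complex) \<circ> \<phi>) = of_real (measure M (B \<inter> P A))"
  proof -
    have "L2_inner M (indicator B :: _ \<Rightarrow> complex) ((indicator A :: _ \<Rightarrow> complex) \<circ> \<phi>) = (\<integral>x. complex_of_real (indicator (B \<inter> P A) x) \<partial>M)"
      unfolding L2_inner_def by (rule Bochner_Integration.integral_cong) (auto simp: P_def indicator_def)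
    then show ?thesis using AS P_sets sets.sets_into_space by (simp add: Int_absorb2)
  qed
  ultimately have "measure M (A \<inter> P B) = measure M (B \<inter> P A)" by simp
  moreover have "emeasure M (A \<inter> P B) \<noteq> \<infinity>"
    using A AS P_sets emeasure_mono[of "A \<inter> P B" A M] good_def by (auto simp: top_unique)
  moreover have "emeasure M (B \<inter> P A) \<noteq> \<infinity>"
    using B AS P_sets emeasure_mono[of "B \<inter> P A" B M] good_def by (auto simp: top_unique)
  ultimately show ?thesis by (simp add: emeasure_eq_ennreal_measure)
qed

lemma good_of_L2:
  assumes f: "f \<in> L2 M" "f \<circ> \<phi> \<in> L2 M" and c: "c > 0"
  shows "good {x\<in>space M. c < cmod (f x)}"
proof -
  have m[measurable]: "f \<in> borel_measurable M" using f by (auto simp: L2_def)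
  have S: "{x\<in>space M. c < cmod (f x)} \<in> sets M" by measurable
  have "emeasure M {x\<in>space M. c < cmod (f x)} \<le> emeasure M {x\<in>space M. c \<le> cmod (f x)}"
    by (rule emeasure_mono) auto
  also have "\<dots> \<le> ennreal ((\<integral>x. (cmod (f x))^2 \<partial>M) / c^2)" by (rule markov2[OF f(1) c])
  also have "\<dots> < \<infinity>" by simp
  finally have 1: "emeasure M {x\<in>space M. c < cmod (f x)} < \<infinity>" .
  have "P {x\<in>space M. c < cmod (f x)} \<subseteq> {x\<in>space M. c \<le> cmod ((f \<circ> \<phi>) x)}"
    using measurable_space[OF phi_meas] by (auto simp: P_def)
  then have "emeasure M (P {x\<in>space M. c < cmod (f x)}) \<le> emeasure M {x\<in>space M. c \<le> cmod ((f \<circ> \<phi>) x)}"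
    by (rule emeasure_mono) (use f(2) in \<open>auto simp: L2_def\<close>)
  also have "\<dots> \<le> ennreal ((\<integral>x. (cmod ((f \<circ> \<phi>) x))^2 \<partial>M) / c^2)" by (rule markov2[OF f(2) c])
  also have "\<dots> < \<infinity>" by simp
  finally show ?thesis using 1 S by (auto simp: good_def)
qed

lemma good_Un: "good A \<Longrightarrow> good B \<Longrightarrow> good (A \<union> B)"
proof -
  assume A: "good A" and B: "good B"
  have "emeasure M (A \<union> B) \<le> emeasure M A + emeasure M B"
    using A B by (intro emeasure_subadditive) (auto simp: good_def)
  also have "\<dots> < \<infinity>" using A B by (auto simp: good_def)
  finally have 1: "emeasure M (A \<union> B) < \<infinity>" .
  have "P (A \<union> B) = P A \<union> P B" by (auto simp: P_def)
  then have "emeasure M (P (A \<union> B)) \<le> emeasure M (P A) + emeasure M (P B)"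
    using A B by (simp, intro emeasure_subadditive) (auto simp: good_def)
  also have "emeasure M (P A) + emeasure M (P B) < \<infinity>" using A B by (auto simp: good_def)
  finally have "emeasure M (P (A \<union> B)) < \<infinity>" .
  then show ?thesis using 1 A B by (auto simp: good_def)
qed

lemma good_empty: "good {}"
  by (auto simp: good_def P_def)

lemma good_finite_UN: "finite I \<Longrightarrow> (\<And>i. i \<in> I \<Longrightarrow> good (A i)) \<Longrightarrow> good (\<Union>i\<in>I. A i)"
  by (induction I rule: finite_induct) (auto intro: good_Un good_empty)

lemma good_subset: "good A \<Longrightarrow> B \<in> sets M \<Longrightarrow> B \<subseteq> A \<Longrightarrow> good B"
proof -
  assume A: "good A" and B: "B \<in> sets M" "B \<subseteq> A"
  have "emeasure M B \<le> emeasure M A" using A B by (intro emeasure_mono) (auto simp: good_def)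
  moreover have "emeasure M (P B) \<le> emeasure M (P A)"
    using A B by (intro emeasure_mono) (auto simp: good_def P_def)
  ultimately show ?thesis using A B by (auto simp: good_def)
qed

lemma exists_G: "\<exists>G. (\<forall>n. good (G n)) \<and> incseq G \<and> space M - (\<Union>n. G n) \<in> null_sets M"
proof -
  interpret sigma_finite_measure M by (rule sf)
  obtain E :: "nat \<Rightarrow> 'a set" where E: "range E \<subseteq> sets M" "(\<Union>i. E i) = space M" "\<And>i. emeasure M (E i) \<noteq> \<infinity>"
    using sigma_finite_incseq by metis
  have dd: "densely_defined M (comp_op M \<phi>)" using sym by (simp add: symmetric_op_def)
  have "\<forall>k m. \<exists>f. f \<in> L2 M \<and> f \<circ> \<phi> \<in> L2 M \<and> L2_norm M (\<lambda>x. f x - indicator (E k) x) < 1 / real (Suc m)"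
  proof (intro allI)
    fix k m
    have "(indicator (E k) :: _ \<Rightarrow> complex) \<in> L2 M" using E by (intro ind_L2) (auto simp: less_top)
    then obtain f where "f \<in> op_dom (comp_op M \<phi>)" "L2_norm M (\<lambda>x. f x - indicator (E k) x) < 1 / real (Suc m)"
      using dd unfolding densely_defined_def by (metis of_nat_0_less_iff zero_less_Suc divide_pos_pos zero_less_one)
    then show "\<exists>f. f \<in> L2 M \<and> f \<circ> \<phi> \<in> L2 M \<and> L2_norm M (\<lambda>x. f x - indicator (E k) x) < 1 / real (Suc m)"
      by (auto simp: op_dom_def comp_op_def)
  qed
  then obtain F where F: "\<And>k m. F k m \<in> L2 M" "\<And>k m. F k m \<circ> \<phi> \<in> L2 M"
    "\<And>k m. L2_norm M (\<lambda>x. F k m x - indicator (E k) x) < 1 / real (Suc m)"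
    by metis
  define S where "S k m = {x\<in>space M. 1/2 < cmod (F k m x)}" for k m
  have Sg: "good (S k m)" for k m unfolding S_def by (rule good_of_L2) (use F in auto)
  define N where "N k = E k - (\<Union>m. S k m)" for k
  have Nnull: "N k \<in> null_sets M" for k
  proof -
    have "(\<Union>m. S k m) \<in> sets M" using Sg by (intro sets.countable_UN) (auto simp: good_def)
    then have Ns: "N k \<in> sets M" using E unfolding N_def by auto
    have bound: "measure M (N k) \<le> 4 / real (Suc m)" for m
    proof -
      define d where "d = (\<lambda>x. F k m x - indicator (E k) x)"
      have dL: "d \<in> L2 M" unfolding d_def
        by (rule L2_diff) (use F E in \<open>auto intro!: ind_L2 simp: less_top\<close>)
      have "N k \<subseteq> {x\<in>space M. 1/2 \<le> cmod (d x)}"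
      proof
        fix x assume x: "x \<in> N k"
        then have xE: "x \<in> E k" and xS: "x \<notin> S k m" by (auto simp: N_def)
        have xs: "x \<in> space M" using xE E by auto
        then have "cmod (F k m x) \<le> 1/2" using xS by (auto simp: S_def)
        moreover have "cmod 1 - cmod (F k m x) \<le> cmod (1 - F k m x)" by (rule norm_triangle_ineq2)
        ultimately have "1/2 \<le> cmod (F k m x - 1)" by (simp add: norm_minus_commute)
        then show "x \<in> {x\<in>space M. 1/2 \<le> cmod (d x)}" using xE xs by (simp add: d_def)
      qed
      then have "emeasure M (N k) \<le> emeasure M {x\<in>space M. 1/2 \<le> cmod (d x)}"
        by (rule emeasure_mono) (use dL in \<open>auto simp: L2_def\<close>)
      also have "\<dots> \<le> ennreal ((\<integral>x. (cmod (d x))^2 \<partial>M) / (1/2)^2)" by (rule markov2[OF dL]) simp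
      finally have em: "emeasure M (N k) \<le> ennreal (4 * (\<integral>x. (cmod (d x))^2 \<partial>M))" by (simp add: power2_eq_square mult.commute)
      have I0: "0 \<le> (\<integral>x. (cmod (d x))^2 \<partial>M)" by simp
      have "sqrt (\<integral>x. (cmod (d x))^2 \<partial>M) < 1 / real (Suc m)" using F(3)[of k m] by (simp add: L2_norm_def d_def)
      then have "(sqrt (\<integral>x. (cmod (d x))^2 \<partial>M))^2 < (1 / real (Suc m))^2"
        by (intro power_strict_mono) auto
      then have "(\<integral>x. (cmod (d x))^2 \<partial>M) < (1 / real (Suc m))^2" using I0 by simp
      also have "\<dots> \<le> 1 / real (Suc m)" by (simp add: power2_eq_square divide_le_eq)
      finally have "4 * (\<integral>x. (cmod (d x))^2 \<partial>M) \<le> 4 / real (Suc m)" by simp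
      then have "emeasure M (N k) \<le> ennreal (4 / real (Suc m))"
        using em by (meson ennreal_leI order_trans)
      then show ?thesis using I0 by (simp add: measure_def enn2real_leI)
    qed
    have "measure M (N k) \<le> 0"
    proof (rule ccontr)
      assume "\<not> measure M (N k) \<le> 0"
      then have pos: "0 < measure M (N k)" by simp
      obtain n :: nat where n: "4 / measure M (N k) < real n" using reals_Archimedean2 by blast
      then have "4 < real n * measure M (N k)" using pos by (simp add: divide_less_eq mult.commute)
      then have "4 < real (Suc n) * measure M (N k)" using pos by (simp add: distrib_right)
      then have "4 / real (Suc n) < measure M (N k)" by (simp add: divide_less_eq mult.commute)
      with bound[of n] show False by simp
    qed
    then have "measure M (N k) = 0" by (simp add: antisym)
    moreover have "emeasure M (N k) \<noteq> \<infinity>"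
      using E(3)[of k] emeasure_mono[of "N k" "E k" M] E(1) by (auto simp: N_def top_unique)
    ultimately have "emeasure M (N k) = 0" by (simp add: emeasure_eq_ennreal_measure)
    then show ?thesis using Ns by auto
  qed
  define G where "G n = (\<Union>p\<in>{..n}\<times>{..n}. S (fst p) (snd p))" for n
  have Gg: "good (G n)" for n unfolding G_def by (rule good_finite_UN) (auto intro: Sg)
  have Gi: "incseq G" unfolding incseq_def G_def by force
  have Gs: "G n \<in> sets M" for n using Gg good_def by auto
  have "space M - (\<Union>n. G n) \<subseteq> (\<Union>k. N k)"
  proof
    fix x assume x: "x \<in> space M - (\<Union>n. G n)"
    then obtain k where xk: "x \<in> E k" using E(2) by auto
    have "x \<notin> S k m" for m
    proof
      assume xS: "x \<in> S k m"
      have "x \<in> G (max k m)" unfolding G_def by (rule UN_I[of "(k,m)"]) (use xS in auto)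
      with x show False by auto
    qed
    then show "x \<in> (\<Union>k. N k)" using xk by (auto simp: N_def)
  qed
  moreover have "(\<Union>k. N k) \<in> null_sets M" using Nnull by auto
  moreover have "space M - (\<Union>n. G n) \<in> sets M" using Gs by auto
  ultimately have "space M - (\<Union>n. G n) \<in> null_sets M" using null_sets_subset by blast
  then show ?thesis using Gg Gi by blast
qed

lemma measure_pres:
  assumes A: "A \<in> sets M"
  shows "emeasure M (P A) = emeasure M A"
proof -
  obtain G where G: "\<And>n. good (G n)" "incseq G" "space M - (\<Union>n. G n) \<in> null_sets M"
    using exists_G by blast
  define Z where "Z = space M - (\<Union>n. G n)"
  have Gs: "G n \<in> sets M" for n using G good_def by auto
  have Z: "Z \<in> null_sets M" "P Z \<in> null_sets M" using G(3) null_pre unfolding Z_def by auto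
  have PI: "incseq (\<lambda>n. P (G n))" using G(2) unfolding incseq_def P_def by blast
  have step1: "emeasure M (P B) = emeasure M B" if B: "good B" for B
  proof -
    have Bs: "B \<in> sets M" using B good_def by auto
    have "(SUP m. emeasure M (B \<inter> P (G m))) = emeasure M (\<Union>m. B \<inter> P (G m))"
      by (rule SUP_emeasure_incseq) (use Bs Gs PI in \<open>auto simp: incseq_def\<close>)
    also have "(\<Union>m. B \<inter> P (G m)) = B - P Z"
      using sets.sets_into_space[OF Bs] measurable_space[OF phi_meas] by (auto simp: Z_def P_def)
    also have "emeasure M (B - P Z) = emeasure M B" by (rule emeasure_Diff_null_set[OF Z(2) Bs])
    finally have 1: "(SUP m. emeasure M (B \<inter> P (G m))) = emeasure M B" .
    have "(SUP m. emeasure M (G m \<inter> P B)) = emeasure M (\<Union>m. G m \<inter> P B)"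
      by (rule SUP_emeasure_incseq) (use Bs Gs G(2) in \<open>auto simp: incseq_def\<close>)
    also have "(\<Union>m. G m \<inter> P B) = P B - Z" by (auto simp: Z_def P_def)
    also have "emeasure M (P B - Z) = emeasure M (P B)" by (rule emeasure_Diff_null_set[OF Z(1)]) (use Bs in auto)
    finally have 2: "(SUP m. emeasure M (G m \<inter> P B)) = emeasure M (P B)" .
    have "\<And>m. emeasure M (B \<inter> P (G m)) = emeasure M (G m \<inter> P B)" using good_sym B G(1) by blast
    then show ?thesis using 1 2 by simp
  qed
  have AG: "good (A \<inter> G n)" for n by (rule good_subset[OF G(1)[of n]]) (use A Gs in auto)
  have "(SUP n. emeasure M (A \<inter> G n)) = emeasure M (\<Union>n. A \<inter> G n)"
    by (rule SUP_emeasure_incseq) (use A Gs G(2) in \<open>auto simp: incseq_def\<close>)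
  also have "(\<Union>n. A \<inter> G n) = A - Z" using sets.sets_into_space[OF A] by (auto simp: Z_def)
  also have "emeasure M (A - Z) = emeasure M A" by (rule emeasure_Diff_null_set[OF Z(1) A])
  finally have 1: "(SUP n. emeasure M (A \<inter> G n)) = emeasure M A" .
  have r: "range (\<lambda>n. P (A \<inter> G n)) \<subseteq> sets M" using A Gs P_sets by auto
  have i: "incseq (\<lambda>n. P (A \<inter> G n))" using G(2) unfolding incseq_def P_def by blast
  have "(SUP n. emeasure M (P (A \<inter> G n))) = emeasure M (\<Union>n. P (A \<inter> G n))"
    by (rule SUP_emeasure_incseq[OF r i])
  also have "(\<Union>n. P (A \<inter> G n)) = P A - P Z" using measurable_space[OF phi_meas] by (auto simp: Z_def P_def)
  also have "emeasure M (P A - P Z) = emeasure M (P A)" by (rule emeasure_Diff_null_set[OF Z(2)]) (use A in auto)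
  finally have 2: "(SUP n. emeasure M (P (A \<inter> G n))) = emeasure M (P A)" .
  show ?thesis using 1 2 step1[OF AG] by simp
qed

lemma mp: "distr M M \<phi> = M"
  by (rule measure_eqI) (auto simp: emeasure_distr measure_pres[unfolded P_def])

lemma L2_comp: "f \<in> L2 M \<Longrightarrow> f \<circ> \<phi> \<in> L2 M"
proof -
  assume f: "f \<in> L2 M"
  then have m[measurable]: "f \<in> borel_measurable M" and i: "integrable M (\<lambda>x. (cmod (f x))^2)"
    by (auto simp: L2_def)
  have "integrable (distr M M \<phi>) (\<lambda>x. (cmod (f x))^2) \<longleftrightarrow> integrable M (\<lambda>x. (cmod (f (\<phi> x)))^2)"
    by (rule integrable_distr_eq) auto
  then have "integrable M (\<lambda>x. (cmod (f (\<phi> x)))^2)" using i mp by simp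
  moreover have "f \<circ> \<phi> \<in> borel_measurable M" unfolding comp_def by measurable
  ultimately show ?thesis by (simp add: L2_def comp_def)
qed

lemma int_comp:
  fixes g :: "'a \<Rightarrow> real"
  assumes "g \<in> borel_measurable M"
  shows "(\<integral>x. g (\<phi> x) \<partial>M) = (\<integral>x. g x \<partial>M)"
  using integral_distr[OF phi_meas assms] mp by simp

lemma norm_comp: "f \<in> L2 M \<Longrightarrow> (\<integral>x. (cmod (f (\<phi> x)))^2 \<partial>M) = (\<integral>x. (cmod (f x))^2 \<partial>M)"
  by (rule int_comp[where g="\<lambda>x. (cmod (f x))^2"]) (auto simp: L2_def)

lemma AE_comp:
  assumes "AE x in M. Q x"
  shows "AE x in M. Q (\<phi> x)"
proof -
  obtain N where N0: "{x\<in>space M. \<not> Q x} \<subseteq> N" "emeasure M N = 0" "N \<in> sets M" using assms by (rule AE_E)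
  then have N: "N \<in> null_sets M" "{x\<in>space M. \<not> Q x} \<subseteq> N" by auto
  have "{x\<in>space M. \<not> Q (\<phi> x)} \<subseteq> P N"
    using N(2) measurable_space[OF phi_meas] by (auto simp: P_def)
  then show ?thesis using null_pre[OF N(1)] by (intro AE_I') auto
qed

lemma sym2: "f \<in> L2 M \<Longrightarrow> k \<in> L2 M \<Longrightarrow> L2_inner M (k \<circ> \<phi>) f = L2_inner M k (f \<circ> \<phi>)"
  by (rule sym_gen) (auto intro: L2_comp)

lemma C2:
  assumes f: "f \<in> L2 M"
  shows "AE x in M. f (\<phi> (\<phi> x)) = f x"
proof -
  have f1: "f \<circ> \<phi> \<in> L2 M" using L2_comp f by blast
  have f2: "(f \<circ> \<phi>) \<circ> \<phi> \<in> L2 M" using L2_comp f1 by blast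
  have "(\<integral>x. (cmod (((f \<circ> \<phi>) \<circ> \<phi>) x - f x))^2 \<partial>M) =
    (\<integral>x. (cmod (((f \<circ> \<phi>) \<circ> \<phi>) x))^2 \<partial>M) + (\<integral>x. (cmod (f x))^2 \<partial>M) - 2 * Re (L2_inner M ((f \<circ> \<phi>) \<circ> \<phi>) f)"
    by (rule L2_expand[OF f2 f])
  also have "(\<integral>x. (cmod (((f \<circ> \<phi>) \<circ> \<phi>) x))^2 \<partial>M) = (\<integral>x. (cmod (f x))^2 \<partial>M)"
    using norm_comp[OF f1] norm_comp[OF f] by (simp add: comp_def)
  also have "L2_inner M ((f \<circ> \<phi>) \<circ> \<phi>) f = L2_inner M (f \<circ> \<phi>) (f \<circ> \<phi>)" by (rule sym2[OF f f1])
  also have "\<dots> = of_real (\<integral>x. (cmod (f x))^2 \<partial>M)"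
    using norm_comp[OF f] by (simp add: L2_inner_self comp_def)
  finally have "(\<integral>x. (cmod (((f \<circ> \<phi>) \<circ> \<phi>) x - f x))^2 \<partial>M) = 0" by simp
  then have "AE x in M. ((f \<circ> \<phi>) \<circ> \<phi>) x - f x = 0"
    by (intro L2_ae_zero) (use L2_diff[OF f2 f] in auto)
  then show ?thesis by (auto simp: comp_def)
qed

lemma adj_sub:
  assumes gh: "(g, h) \<in> adjoint_op M (comp_op M \<phi>)"
  shows "AE x in M. h x = g (\<phi> x)"
proof -
  have g: "g \<in> L2 M" and h: "h \<in> L2 M"
    and adj: "\<And>f. f \<in> L2 M \<Longrightarrow> L2_inner M (f \<circ> \<phi>) g = L2_inner M f h"
    using gh L2_comp by (auto simp: adjoint_op_def comp_op_def)
  have g1: "g \<circ> \<phi> \<in> L2 M" using L2_comp g by blast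
  define d where "d = (\<lambda>x. h x - (g \<circ> \<phi>) x)"
  have d: "d \<in> L2 M" unfolding d_def by (rule L2_diff[OF h g1])
  have pt: "(\<lambda>x. d x * cnj (d x)) = (\<lambda>x. d x * cnj (h x) - d x * cnj ((g \<circ> \<phi>) x))"
    by (rule ext) (simp add: d_def right_diff_distrib)
  have "L2_inner M d d = L2_inner M d h - L2_inner M d (g \<circ> \<phi>)"
    unfolding L2_inner_def pt
    by (rule Bochner_Integration.integral_diff[OF L2_mult_int[OF d h] L2_mult_int[OF d g1]])
  also have "L2_inner M d h = L2_inner M (d \<circ> \<phi>) g" using adj[OF d] by simp
  also have "L2_inner M (d \<circ> \<phi>) g = L2_inner M d (g \<circ> \<phi>)" by (rule sym2[OF g d])
  finally have "L2_inner M d d = 0" by (simp add: o_def)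
  then have "(\<integral>x. (cmod (d x))^2 \<partial>M) = 0" by (simp add: L2_inner_self)
  then have "AE x in M. d x = 0" by (rule L2_ae_zero[OF d])
  then show ?thesis by (auto simp: d_def)
qed

lemma pos_id:
  assumes pos: "positive_op M (comp_op M \<phi>)" and f: "f \<in> L2 M"
  shows "AE x in M. f (\<phi> x) = f x"
proof -
  have f1: "f \<circ> \<phi> \<in> L2 M" using L2_comp f by blast
  define g where "g = (\<lambda>x. f x - (f \<circ> \<phi>) x)"
  have g: "g \<in> L2 M" unfolding g_def by (rule L2_diff[OF f f1])
  have g1: "g \<circ> \<phi> \<in> L2 M" using L2_comp g by blast
  have "(g, g \<circ> \<phi>) \<in> comp_op M \<phi>" using g g1 by (auto simp: comp_op_def)
  then have "0 \<le> L2_inner M (g \<circ> \<phi>) g" using pos by (auto simp: positive_op_def)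
  moreover have "L2_inner M (g \<circ> \<phi>) g = L2_inner M (\<lambda>x. - g x) g"
  proof (rule inner_cong)
    show "aeq M (g \<circ> \<phi>) (\<lambda>x. - g x)" unfolding aeq_def
      using C2[OF f] by (auto simp: g_def comp_def elim: AE_mp)
  qed (use g g1 in \<open>auto simp: L2_def aeq_def\<close>)
  moreover have "L2_inner M (\<lambda>x. - g x) g = - of_real (\<integral>x. (cmod (g x))^2 \<partial>M)"
    using L2_inner_self[of M g] by (simp add: L2_inner_def)
  ultimately have "0 \<le> - complex_of_real (\<integral>x. (cmod (g x))^2 \<partial>M)" by simp
  then have "(\<integral>x. (cmod (g x))^2 \<partial>M) \<le> 0" by (simp add: less_eq_complex_def)
  moreover have "0 \<le> (\<integral>x. (cmod (g x))^2 \<partial>M)" by simp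
  ultimately have "(\<integral>x. (cmod (g x))^2 \<partial>M) = 0" by simp
  then have "AE x in M. g x = 0" by (rule L2_ae_zero[OF g])
  then show ?thesis by (auto simp: g_def)
qed

lemma aeq_refl: "aeq M f f" by (simp add: aeq_def)

lemma main1:
  "selfadjoint_op M (comp_op M \<phi>) \<and> unitary_op M (comp_op M \<phi>) \<and>
   op_eq M (op_comp M (comp_op M \<phi>) (comp_op M \<phi>)) (identity_op M)"
proof (intro conjI)
  have dd: "densely_defined M (comp_op M \<phi>)" and s1: "op_sub M (comp_op M \<phi>) (adjoint_op M (comp_op M \<phi>))"
    using sym by (auto simp: symmetric_op_def)
  have s2: "op_sub M (adjoint_op M (comp_op M \<phi>)) (comp_op M \<phi>)"
  proof (rule op_subI)
    fix g h assume gh: "(g, h) \<in> adjoint_op M (comp_op M \<phi>)"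
    then have g: "g \<in> L2 M" by (auto simp: adjoint_op_def)
    have "(g, g \<circ> \<phi>) \<in> comp_op M \<phi>" using g L2_comp by (auto simp: comp_op_def)
    moreover have "aeq M h (g \<circ> \<phi>)" using adj_sub[OF gh] by (simp add: aeq_def comp_def)
    ultimately show "\<exists>f' g'. (f', g') \<in> comp_op M \<phi> \<and> aeq M g f' \<and> aeq M h g'"
      using aeq_refl by blast
  qed
  show "selfadjoint_op M (comp_op M \<phi>)" using dd s1 s2 by (simp add: selfadjoint_op_def op_eq_def)
  have u1: "\<exists>(f', g)\<in>comp_op M \<phi>. aeq M f f'" if f: "f \<in> L2 M" for f
    by (rule bexI[of _ "(f, f \<circ> \<phi>)"]) (use f L2_comp in \<open>auto simp: comp_op_def aeq_def\<close>)
  have u2: "L2_norm M g = L2_norm M f" if "(f, g) \<in> comp_op M \<phi>" for f g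
    using that norm_comp by (auto simp: comp_op_def L2_norm_def comp_def)
  have u3: "\<exists>(f, g)\<in>comp_op M \<phi>. aeq M g h" if h: "h \<in> L2 M" for h
  proof (rule bexI[of _ "(h \<circ> \<phi>, (h \<circ> \<phi>) \<circ> \<phi>)"])
    show "(h \<circ> \<phi>, (h \<circ> \<phi>) \<circ> \<phi>) \<in> comp_op M \<phi>" using h L2_comp by (auto simp: comp_op_def)
    show "case (h \<circ> \<phi>, (h \<circ> \<phi>) \<circ> \<phi>) of (f, g) \<Rightarrow> aeq M g h"
      using C2[OF h] by (simp add: aeq_def comp_def)
  qed
  show "unitary_op M (comp_op M \<phi>)" unfolding unitary_op_def using u1 u2 u3 by blast
  have c1: "op_sub M (op_comp M (comp_op M \<phi>) (comp_op M \<phi>)) (identity_op M)"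
  proof (rule op_subI)
    fix f h assume "(f, h) \<in> op_comp M (comp_op M \<phi>) (comp_op M \<phi>)"
    then obtain g g' where fg: "(f, g) \<in> comp_op M \<phi>" and gg: "aeq M g g'" and gh: "(g', h) \<in> comp_op M \<phi>"
      by (auto simp: op_comp_def)
    from fg have f: "f \<in> L2 M" and g: "g = f \<circ> \<phi>" by (auto simp: comp_op_def)
    from gh have h: "h = g' \<circ> \<phi>" by (auto simp: comp_op_def)
    have "AE x in M. g (\<phi> x) = g' (\<phi> x)" using gg by (intro AE_comp) (simp add: aeq_def)
    then have "aeq M h f" using C2[OF f] unfolding aeq_def h g by (auto elim: AE_mp)
    moreover have "(f, f) \<in> identity_op M" using f by (simp add: identity_op_def)
    ultimately show "\<exists>f' g'. (f', g') \<in> identity_op M \<and> aeq M f f' \<and> aeq M h g'"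
      using aeq_refl by blast
  qed
  have c2: "op_sub M (identity_op M) (op_comp M (comp_op M \<phi>) (comp_op M \<phi>))"
  proof (rule op_subI)
    fix f f' assume "(f, f') \<in> identity_op M"
    then have f: "f \<in> L2 M" and ff: "f' = f" by (auto simp: identity_op_def)
    have "(f, (f \<circ> \<phi>) \<circ> \<phi>) \<in> op_comp M (comp_op M \<phi>) (comp_op M \<phi>)"
      using f L2_comp unfolding op_comp_def comp_op_def
      by (auto intro!: exI[of _ "f \<circ> \<phi>"] simp: aeq_def)
    moreover have "aeq M f' ((f \<circ> \<phi>) \<circ> \<phi>)" using C2[OF f] ff by (auto simp: aeq_def comp_def elim: AE_mp)
    ultimately show "\<exists>g g'. (g, g') \<in> op_comp M (comp_op M \<phi>) (comp_op M \<phi>) \<and> aeq M f g \<and> aeq M f' g'"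
      using aeq_refl by blast
  qed
  show "op_eq M (op_comp M (comp_op M \<phi>) (comp_op M \<phi>)) (identity_op M)"
    using c1 c2 by (simp add: op_eq_def)
qed

lemma main2:
  assumes pos: "positive_op M (comp_op M \<phi>)"
  shows "op_eq M (comp_op M \<phi>) (identity_op M)"
proof -
  have c1: "op_sub M (comp_op M \<phi>) (identity_op M)"
  proof (rule op_subI)
    fix f g assume "(f, g) \<in> comp_op M \<phi>"
    then have f: "f \<in> L2 M" and g: "g = f \<circ> \<phi>" by (auto simp: comp_op_def)
    have "(f, f) \<in> identity_op M" using f by (simp add: identity_op_def)
    moreover have "aeq M g f" using pos_id[OF pos f] g by (simp add: aeq_def comp_def)
    ultimately show "\<exists>f' g'. (f', g') \<in> identity_op M \<and> aeq M f f' \<and> aeq M g g'"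
      using aeq_refl by blast
  qed
  have c2: "op_sub M (identity_op M) (comp_op M \<phi>)"
  proof (rule op_subI)
    fix f f' assume "(f, f') \<in> identity_op M"
    then have f: "f \<in> L2 M" and ff: "f' = f" by (auto simp: identity_op_def)
    have "(f, f \<circ> \<phi>) \<in> comp_op M \<phi>" using f L2_comp by (auto simp: comp_op_def)
    moreover have "aeq M f' (f \<circ> \<phi>)" using pos_id[OF pos f] ff by (auto simp: aeq_def comp_def elim: AE_mp)
    ultimately show "\<exists>g g'. (g, g') \<in> comp_op M \<phi> \<and> aeq M f g \<and> aeq M f' g'"
      using aeq_refl by blast
  qed
  show ?thesis using c1 c2 by (simp add: op_eq_def)
qed

end

theorem propositionB1:
  fixes M :: "'a measure" and \<phi> :: "'a \<Rightarrow> 'a"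
  assumes "sigma_finite_measure M"
    and "nonsingular M \<phi>"
  shows "(symmetric_op M (comp_op M \<phi>) \<longrightarrow>
           selfadjoint_op M (comp_op M \<phi>) \<and> unitary_op M (comp_op M \<phi>) \<and>
           op_eq M (op_comp M (comp_op M \<phi>) (comp_op M \<phi>)) (identity_op M)) \<and>
         (positive_op M (comp_op M \<phi>) \<and> symmetric_op M (comp_op M \<phi>) \<longrightarrow>
           op_eq M (comp_op M \<phi>) (identity_op M))"
proof (rule conjI; rule impI)
  assume s: "symmetric_op M (comp_op M \<phi>)"
  interpret cs M \<phi> by (rule cs.intro[OF assms s])
  show "selfadjoint_op M (comp_op M \<phi>) \<and> unitary_op M (comp_op M \<phi>) \<and>
           op_eq M (op_comp M (comp_op M \<phi>) (comp_op M \<phi>)) (identity_op M)" by (rule main1)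
next
  assume s: "positive_op M (comp_op M \<phi>) \<and> symmetric_op M (comp_op M \<phi>)"
  interpret cs M \<phi> by (rule cs.intro[OF assms conjunct2[OF s]])
  show "op_eq M (comp_op M \<phi>) (identity_op M)" using s by (intro main2) auto
qed

end
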